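(* Let $p$ be an odd prime, $n\ge1$, $G=\mu_{p^n}$ and let $\mathcal{P}$ be a unital partition of $G$ such that $|A|$ is a power of $p$ for every $A\in\mathcal{P}$ (condition (p)). Then $\mathcal{P}_i\cap\mathcal{P}_j=\emptyset$ for all $i\neq j$ in $\{0,\dots,n\}$, i.e. $\mathcal{P}=\bigsqcup_k\mathcal{P}_k$. Moreover, for each $0\le k\le n-1$ one has $u_k=\phi(p^{b_k})$ for some integer $b_k$ with $1\le b_k\le n-k$.
   Context: A unital partition of a finite commutative group $G$ is a partition $G=\{1\}\sqcup A_0\sqcup\dots\sqcup A_s$ such that, with $a_i=\sum_{x\in A_i}x\in\mathbb{Z}[G]$, the $\mathbb{Z}$-span of $1$ and the $a_i$ is closed under multiplication in $\mathbb{Z}[G]$. $B_k=\{x^{p^k}\mid x\text{ a generator of }G\}$, $\mathcal{P}_k=\{A\in\mathcal{P}\mid A\cap B_k\neq\emptyset\}$. Fix an integer $\alpha$ generating $(\mathbb{Z}/p^n\mathbb{Z})^\times$; for $A\in\mathcal{P}_k$ and $y\in A\cap B_k$, $u_k$ is the smallest positive integer with $y^{\alpha^{u_k}}\in A$ (independent of the choices of $A$, $y$). $\phi$ is Euler's function. *)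

theory Defs
  imports "HOL-Number_Theory.Number_Theory"
begin

text \<open>The cyclic group mu_N (N = p^n) is modelled additively as the residues
  {0..<N}: the element x stands for zeta^x, the identity 1 is 0, x^m is (m*x) mod N.
  Elements of the group ring Z[G] are functions nat => int vanishing outside {0..<N}.\<close>

definition grp :: "nat \<Rightarrow> nat set" where
  "grp N = {0..<N}"

definition gr_mult :: "nat \<Rightarrow> (nat \<Rightarrow> int) \<Rightarrow> (nat \<Rightarrow> int) \<Rightarrow> nat \<Rightarrow> int" where
  "gr_mult N f g = (\<lambda>x. if x < N then (\<Sum>y<N. f y * g ((x + N - y) mod N)) else 0)"

definition ind :: "nat set \<Rightarrow> nat \<Rightarrow> int" where
  "ind A = (\<lambda>x. if x \<in> A then 1 else 0)"

definition zspan :: "(nat \<Rightarrow> int) set \<Rightarrow> (nat \<Rightarrow> int) set" where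
  "zspan S = {f. \<exists>c. f = (\<lambda>x. \<Sum>v\<in>S. c v * v x)}"

text \<open>A unital partition, recorded as the set of all blocks including the block {1}
  (here {0}); the span of 1 = ind {0} and the block sums a_i = ind A_i must be
  closed under multiplication.\<close>
definition unital_partition :: "nat \<Rightarrow> nat set set \<Rightarrow> bool" where
  "unital_partition N P \<longleftrightarrow>
     {0} \<in> P \<and> (\<forall>A\<in>P. A \<noteq> {} \<and> A \<subseteq> grp N) \<and> \<Union>P = grp N \<and>
     (\<forall>A\<in>P. \<forall>B\<in>P. A \<noteq> B \<longrightarrow> A \<inter> B = {}) \<and>
     (\<forall>f\<in>zspan (ind ` P). \<forall>g\<in>zspan (ind ` P). gr_mult N f g \<in> zspan (ind ` P))"

definition generators :: "nat \<Rightarrow> nat set" where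
  "generators N = {x \<in> grp N. coprime x N}"

definition Bset :: "nat \<Rightarrow> nat \<Rightarrow> nat \<Rightarrow> nat set" where
  "Bset p N k = (\<lambda>x. (p ^ k * x) mod N) ` generators N"

definition Pk :: "nat \<Rightarrow> nat \<Rightarrow> nat set set \<Rightarrow> nat \<Rightarrow> nat set set" where
  "Pk p N P k = {A \<in> P. A \<inter> Bset p N k \<noteq> {}}"

definition uexp :: "nat \<Rightarrow> nat \<Rightarrow> nat set \<Rightarrow> nat \<Rightarrow> nat" where
  "uexp N \<alpha> A y = (LEAST u. u > 0 \<and> (\<alpha> ^ u * y) mod N \<in> A)"

end

theory Submission
  imports Defs
begin


lemma rotate_rotate_add: "rotate i (rotate j xs) = rotate (i+j) xs"
  by (simp add: rotate_rotate)

lemma rot_mod: "length xs = q \<Longrightarrow> rotate i xs = rotate (i mod q) xs"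
  by (metis rotate_conv_mod)

lemma rot_back:
  assumes "length xs = q" "q > 0"
  shows "rotate (q - i mod q) (rotate i xs) = xs"
proof -
  have "rotate (q - i mod q) (rotate i xs) = rotate (q - i mod q + i) xs" by (simp add: rotate_rotate_add)
  also have "\<dots> = rotate ((q - i mod q + i) mod q) xs" using assms rot_mod by blast
  also have "(q - i mod q + i) mod q = 0"
  proof -
    have "i mod q < q" using assms by simp
    moreover have "i mod q \<le> i" by simp
    ultimately have e: "q - i mod q + i = q + (i - i mod q)" by linarith
    have "i - i mod q = q * (i div q)" by (simp add: minus_mod_eq_mult_div)
    hence "q + (i - i mod q) = q * (i div q + 1)" by simp
    thus ?thesis by (subst e) simp
  qed
  finally show ?thesis by simp
qed

lemma rotate1_fix_rotate:
  assumes "rotate1 ys = ys" shows "rotate i ys = ys"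
  using assms by (induction i) (auto simp: rotate_def)

lemma rot_fix_prime:
  assumes q: "prime q" and len: "length xs = q" and d: "0 < d" "d < q" and fx: "rotate d xs = xs"
  shows "rotate1 xs = xs"
proof -
  have all: "rotate (d*k) xs = xs" for k
  proof (induction k)
    case (Suc k)
    have "rotate (d * Suc k) xs = rotate d (rotate (d*k) xs)" by (simp add: rotate_rotate_add add.commute)
    then show ?case using Suc fx by simp
  qed simp
  have "coprime d q" using q d
    by (metis dvd_imp_le not_less prime_imp_coprime coprime_commute)
  then obtain k where k: "[d * k = 1] (mod q)" using cong_solve_coprime_nat[OF \<open>coprime d q\<close>] by auto
  have q1: "q > 1" using q prime_gt_1_nat by blast
  have "(d*k) mod q = 1" using k q1 unfolding cong_def by simp
  hence "rotate (d*k) xs = rotate 1 xs" using rot_mod[OF len] by metis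
  thus ?thesis using all by simp
qed

definition orb :: "nat \<Rightarrow> 'a list \<Rightarrow> 'a list set" where
  "orb q xs = (\<lambda>i. rotate i xs) ` {..<q}"

lemma necklace:
  assumes q: "prime q" and fin: "finite X" and len: "\<forall>xs\<in>X. length xs = q"
    and cl: "\<forall>xs\<in>X. rotate1 xs \<in> X"
  shows "card X mod q = card {xs\<in>X. rotate1 xs = xs} mod q"
proof -
  have q0: "q > 0" using q prime_gt_0_nat by blast
  define F where "F = {xs\<in>X. rotate1 xs = xs}"
  define Y where "Y = X - F"
  have clr: "rotate i xs \<in> X" if "xs \<in> X" for xs i
    using that by (induction i) (auto simp: rotate_def cl)
  have Ynf: "rotate1 (rotate i xs) \<noteq> rotate i xs" if "xs \<in> Y" for xs i
  proof
    assume h: "rotate1 (rotate i xs) = rotate i xs"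
    have lx: "length xs = q" using that len Y_def by auto
    have "rotate1 xs = rotate1 (rotate (q - i mod q) (rotate i xs))" using rot_back[OF lx q0] by simp
    also have "\<dots> = rotate (q - i mod q) (rotate1 (rotate i xs))" by (simp add: rotate1_rotate_swap)
    also have "\<dots> = xs" using h rot_back[OF lx q0] by simp
    finally show False using that unfolding Y_def F_def by auto
  qed
  have orbY: "orb q xs \<subseteq> Y" if "xs \<in> Y" for xs
    using that Ynf clr unfolding orb_def Y_def F_def by fastforce
  have orbcard: "card (orb q xs) = q" if "xs \<in> Y" for xs
  proof -
    have lx: "length xs = q" using that len Y_def by auto
    have "inj_on (\<lambda>i. rotate i xs) {..<q}"
    proof (rule inj_onI, rule ccontr)
      fix i j assume i: "i \<in> {..<q}" and j: "j \<in> {..<q}" and e: "rotate i xs = rotate j xs" and ne: "i \<noteq> j"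
      have key: "rotate (b - a) xs = xs" if "a < b" "b < q" "rotate a xs = rotate b xs" for a b
      proof -
        have "rotate (b - a) xs = rotate (q - a mod q) (rotate b xs)"
        proof -
          have "rotate (q - a mod q) (rotate b xs) = rotate (q - a + b) xs" using that by (simp add: rotate_rotate_add)
          also have "\<dots> = rotate ((q - a + b) mod q) xs" using rot_mod[OF lx] by blast
          also have "(q - a + b) mod q = b - a"
          proof -
            have e: "q - a + b = (b - a) + q" using that by simp
            have "((b - a) + q) mod q = (b - a) mod q" by (rule mod_add_self2)
            also have "\<dots> = b - a" using that by (intro mod_less) linarith
            finally have "((b - a) + q) mod q = b - a" .
            thus ?thesis by (subst e)
          qed
          finally show ?thesis by simp
        qed
        also have "\<dots> = rotate (q - a mod q) (rotate a xs)" using that by simp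
        also have "\<dots> = xs" using rot_back[OF lx q0] by simp
        finally show ?thesis .
      qed
      have "\<exists>d. 0 < d \<and> d < q \<and> rotate d xs = xs"
      proof (cases "i < j")
        case True then show ?thesis using key[of i j] e i j by (intro exI[of _ "j - i"]) auto
      next
        case False then have "j < i" using ne by auto
        then show ?thesis using key[of j i] e i j by (intro exI[of _ "i - j"]) auto
      qed
      then obtain d where "0 < d" "d < q" "rotate d xs = xs" by blast
      hence "rotate1 xs = xs" using rot_fix_prime[OF q lx] by blast
      thus False using that Ynf[of xs 0] by simp
    qed
    thus ?thesis unfolding orb_def by (simp add: card_image)
  qed
  have orbmem: "xs \<in> orb q xs" if "xs \<in> Y" for xs
    using q0 unfolding orb_def by force
  have orbeq: "orb q ys = orb q xs" if xY: "xs \<in> Y" and yo: "ys \<in> orb q xs" for xs ys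
  proof -
    have lx: "length xs = q" using xY len Y_def by auto
    obtain j where j: "j < q" "ys = rotate j xs" using yo unfolding orb_def by auto
    have "orb q ys = (\<lambda>i. rotate ((i + j) mod q) xs) ` {..<q}"
      unfolding orb_def j(2) by (metis (no_types) rotate_rotate_add rot_mod[OF lx])
    also have "\<dots> = orb q xs"
    proof -
      have "(\<lambda>i. (i + j) mod q) ` {..<q} = {..<q}"
      proof
        show "(\<lambda>i. (i + j) mod q) ` {..<q} \<subseteq> {..<q}" using q0 by auto
        show "{..<q} \<subseteq> (\<lambda>i. (i + j) mod q) ` {..<q}"
        proof
          fix t assume t: "t \<in> {..<q}"
          have "(t + q - j) mod q \<in> {..<q}" using q0 by auto
          moreover have "((t + q - j) mod q + j) mod q = t"
          proof -
            have "((t + q - j) mod q + j) mod q = (t + q - j + j) mod q" by (simp add: mod_add_left_eq)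
            also have "t + q - j + j = t + q" using j by simp
            finally show ?thesis using t by simp
          qed
          ultimately show "t \<in> (\<lambda>i. (i + j) mod q) ` {..<q}" by (metis image_eqI)
        qed
      qed
      hence "(\<lambda>i. rotate i xs) ` ((\<lambda>i. (i + j) mod q) ` {..<q}) = (\<lambda>i. rotate i xs) ` {..<q}" by simp
      thus ?thesis unfolding orb_def image_image .
    qed
    finally show ?thesis .
  qed
  define C where "C = orb q ` Y"
  have UC: "\<Union>C = Y" using orbY orbmem unfolding C_def by blast
  have finY: "finite Y" using fin Y_def by auto
  have "q * card C = card (\<Union>C)"
  proof (rule card_partition)
    show "finite C" using finY C_def by auto
    show "finite (\<Union>C)" using UC finY by simp
    show "\<And>c. c \<in> C \<Longrightarrow> card c = q" unfolding C_def using orbcard by blast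
    show "\<And>c1 c2. c1 \<in> C \<Longrightarrow> c2 \<in> C \<Longrightarrow> c1 \<noteq> c2 \<Longrightarrow> c1 \<inter> c2 = {}"
    proof -
      fix c1 c2 assume "c1 \<in> C" "c2 \<in> C" "c1 \<noteq> c2"
      then obtain x1 x2 where x: "x1 \<in> Y" "x2 \<in> Y" "c1 = orb q x1" "c2 = orb q x2" unfolding C_def by auto
      show "c1 \<inter> c2 = {}"
      proof (rule ccontr)
        assume "c1 \<inter> c2 \<noteq> {}"
        then obtain z where z: "z \<in> orb q x1" "z \<in> orb q x2" using x by auto
        have "orb q z = orb q x1" by (rule orbeq[OF x(1) z(1)])
        moreover have "orb q z = orb q x2" by (rule orbeq[OF x(2) z(2)])
        ultimately show False using x \<open>c1 \<noteq> c2\<close> by simp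
      qed
    qed
  qed
  hence "card Y = q * card C" using UC by simp
  moreover have "card X = card Y + card F"
  proof -
    have "F \<subseteq> X" unfolding F_def by auto
    thus ?thesis using fin unfolding Y_def by (metis card_Diff_subset card_mono finite_subset le_add_diff_inverse2)
  qed
  ultimately show ?thesis unfolding F_def by simp
qed


locale upart =
  fixes N :: nat and P :: "nat set set"
  assumes N1: "N > 1" and up: "unital_partition N P"
begin

lemma zeroP: "{0} \<in> P" using up unfolding unital_partition_def by auto
lemma blk_sub: "A \<in> P \<Longrightarrow> A \<subseteq> {..<N}" using up unfolding unital_partition_def grp_def by auto
lemma blk_ne: "A \<in> P \<Longrightarrow> A \<noteq> {}" using up unfolding unital_partition_def by auto
lemma cover: "x < N \<Longrightarrow> \<exists>B\<in>P. x \<in> B"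
proof -
  assume "x < N"
  hence "x \<in> \<Union>P" using up unfolding unital_partition_def grp_def by auto
  thus ?thesis by auto
qed
lemma blk_eq: "A \<in> P \<Longrightarrow> B \<in> P \<Longrightarrow> x \<in> A \<Longrightarrow> x \<in> B \<Longrightarrow> A = B"
  using up unfolding unital_partition_def by blast
lemma finP: "finite P"
proof -
  have "P \<subseteq> Pow {..<N}" using blk_sub by auto
  thus ?thesis by (rule finite_subset) simp
qed
lemma finB: "A \<in> P \<Longrightarrow> finite A" using blk_sub finite_subset by blast

abbreviation "S \<equiv> zspan (ind ` P)"

lemma ind_S: "B \<in> P \<Longrightarrow> ind B \<in> S"
proof -
  assume B: "B \<in> P"
  have e: "(\<lambda>x. \<Sum>v\<in>ind ` P. (if v = ind B then 1 else 0) * v x) = (\<lambda>x. \<Sum>v\<in>ind ` P. if v = ind B then v x else 0)"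
    by (intro ext sum.cong) auto
  have hb: "ind B = (\<lambda>x. \<Sum>v\<in>ind ` P. (if v = ind B then 1 else 0) * v x)"
    unfolding e using finP B by (simp add: sum.delta)
  show ?thesis unfolding zspan_def mem_Collect_eq by (rule exI[where x="\<lambda>v. if v = ind B then 1 else 0"]) (rule hb)
qed

lemma mult_S: "f \<in> S \<Longrightarrow> g \<in> S \<Longrightarrow> gr_mult N f g \<in> S"
  using up unfolding unital_partition_def by blast

lemma S_const:
  assumes f: "f \<in> S" and B: "B \<in> P" and x: "x \<in> B" and y: "y \<in> B"
  shows "f x = f y"
proof -
  obtain c where c: "f = (\<lambda>x. \<Sum>v\<in>ind ` P. c v * v x)" using f unfolding zspan_def by blast
  have val: "v z = (if v = ind B then 1 else 0)" if vP: "v \<in> ind ` P" and zB: "z \<in> B" for v z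
  proof -
    obtain B' where B': "B' \<in> P" "v = ind B'" using vP by auto
    show ?thesis
    proof (cases "z \<in> B'")
      case True
      then have "B' = B" using blk_eq B'(1) B zB by blast
      then show ?thesis using B' True unfolding ind_def by auto
    next
      case False
      then have "B' \<noteq> B" using zB by auto
      moreover have "ind B' \<noteq> ind B \<or> B' = B"
      proof -
        { assume "ind B' = ind B" hence "B' = B" unfolding ind_def by (metis (full_types) zero_neq_one subsetI subset_antisym) }
        thus ?thesis by blast
      qed
      ultimately show ?thesis using B' False unfolding ind_def by auto
    qed
  qed
  have "f z = c (ind B)" if "z \<in> B" for z
  proof -
    have "f z = (\<Sum>v\<in>ind ` P. c v * (if v = ind B then 1 else 0))"
      unfolding c using val[OF _ that] by (intro sum.cong) auto
    also have "\<dots> = c (ind B)" using finP B by (simp add: if_distrib sum.delta cong: if_cong)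
    finally show ?thesis .
  qed
  thus ?thesis using x y by simp
qed

fun cp :: "nat set \<Rightarrow> nat \<Rightarrow> nat \<Rightarrow> int" where
  "cp A 0 = ind {0}"
| "cp A (Suc m) = gr_mult N (ind A) (cp A m)"

lemma cp_S: "A \<in> P \<Longrightarrow> cp A m \<in> S"
  by (induction m) (auto intro: mult_S ind_S zeroP)

definition L :: "nat set \<Rightarrow> nat \<Rightarrow> nat \<Rightarrow> nat list set" where
  "L A m z = {xs. length xs = m \<and> set xs \<subseteq> A \<and> sum_list xs mod N = z}"

lemma finL: "finite A \<Longrightarrow> finite (L A m z)"
proof -
  assume "finite A"
  hence "finite {xs. set xs \<subseteq> A \<and> length xs = m}" by (rule finite_lists_length_eq)
  thus ?thesis unfolding L_def by (rule finite_subset[rotated]) auto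
qed

lemma modshift:
  assumes "y < N" "z < N"
  shows "(y + s) mod N = z \<longleftrightarrow> s mod N = (z + N - y) mod N"
proof -
  have "(y + s) mod N = z \<longleftrightarrow> [y + s = z] (mod N)" using assms unfolding cong_def by simp
  also have "\<dots> \<longleftrightarrow> [y + s = y + (z + N - y)] (mod N)"
  proof -
    have "y + (z + N - y) = z + N" using assms by simp
    hence "[y + (z + N - y) = z] (mod N)" unfolding cong_def by simp
    thus ?thesis by (meson cong_sym cong_trans)
  qed
  also have "\<dots> \<longleftrightarrow> [s = z + N - y] (mod N)" by (rule cong_add_lcancel_nat)
  finally show ?thesis unfolding cong_def .
qed

lemma L_Suc:
  assumes A: "A \<subseteq> {..<N}" and z: "z < N"
  shows "(\<Union>y\<in>A. (\<lambda>xs. y # xs) ` L A m ((z + N - y) mod N)) = L A (Suc m) z"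
proof (rule Set.set_eqI)
  fix ys
  show "ys \<in> (\<Union>y\<in>A. (\<lambda>xs. y # xs) ` L A m ((z + N - y) mod N)) \<longleftrightarrow> ys \<in> L A (Suc m) z"
  proof
    assume "ys \<in> (\<Union>y\<in>A. (\<lambda>xs. y # xs) ` L A m ((z + N - y) mod N))"
    then obtain y xs where "y \<in> A" "xs \<in> L A m ((z + N - y) mod N)" "ys = y # xs" by auto
    moreover have "y < N" using A \<open>y \<in> A\<close> by auto
    ultimately show "ys \<in> L A (Suc m) z" using modshift[OF _ z] unfolding L_def by auto
  next
    assume h: "ys \<in> L A (Suc m) z"
    then obtain y xs where yx: "ys = y # xs" unfolding L_def by (cases ys) auto
    have "y \<in> A" using h yx unfolding L_def by auto
    moreover have "y < N" using A \<open>y \<in> A\<close> by auto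
    ultimately have "xs \<in> L A m ((z + N - y) mod N)" using h yx modshift[OF _ z] unfolding L_def by auto
    thus "ys \<in> (\<Union>y\<in>A. (\<lambda>xs. y # xs) ` L A m ((z + N - y) mod N))" using \<open>y \<in> A\<close> yx by blast
  qed
qed

lemma cp_count:
  assumes A: "A \<subseteq> {..<N}" "finite A" and z: "z < N"
  shows "cp A m z = int (card (L A m z))"
  using z
proof (induction m arbitrary: z)
  case 0
  have "L A 0 z = (if z = 0 then {[]} else {})" unfolding L_def by auto
  then show ?case by (simp add: ind_def)
next
  case (Suc m)
  have "cp A (Suc m) z = (\<Sum>y<N. ind A y * cp A m ((z + N - y) mod N))"
    using Suc.prems by (simp add: gr_mult_def)
  also have "\<dots> = (\<Sum>y\<in>A. cp A m ((z + N - y) mod N))"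
  proof -
    have "(\<Sum>y<N. ind A y * cp A m ((z + N - y) mod N)) = (\<Sum>y\<in>{..<N} \<inter> A. cp A m ((z + N - y) mod N))"
    proof -
      have "(\<Sum>y<N. ind A y * cp A m ((z + N - y) mod N)) = (\<Sum>y<N. if y \<in> A then cp A m ((z + N - y) mod N) else 0)"
        unfolding ind_def by (intro sum.cong) auto
      also have "\<dots> = (\<Sum>y\<in>{..<N} \<inter> A. cp A m ((z + N - y) mod N))"
        by (simp add: sum.inter_restrict)
      finally show ?thesis .
    qed
    also have "{..<N} \<inter> A = A" using A by auto
    finally show ?thesis .
  qed
  also have "\<dots> = (\<Sum>y\<in>A. int (card (L A m ((z + N - y) mod N))))"
    using N1 by (intro sum.cong refl Suc.IH) simp
  also have "\<dots> = int (\<Sum>y\<in>A. card ((\<lambda>xs. y # xs) ` L A m ((z + N - y) mod N)))"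
    by (simp add: card_image)
  also have "(\<Sum>y\<in>A. card ((\<lambda>xs. y # xs) ` L A m ((z + N - y) mod N))) =
      card (\<Union>y\<in>A. (\<lambda>xs. y # xs) ` L A m ((z + N - y) mod N))"
    by (rule card_UN_disjoint[symmetric]) (auto simp: A finL)
  also have "(\<Union>y\<in>A. (\<lambda>xs. y # xs) ` L A m ((z + N - y) mod N)) = L A (Suc m) z"
    by (rule L_Suc[OF A(1) Suc.prems])
  finally show ?case .
qed

end


context upart begin

definition mu :: "nat \<Rightarrow> nat set \<Rightarrow> nat set" where
  "mu m X = (\<lambda>x. m * x mod N) ` X"

lemma mu_sub: "mu m X \<subseteq> {..<N}" using N1 unfolding mu_def by auto

lemma rot_fix_rep:
  assumes "rotate1 xs = xs" shows "xs = replicate (length xs) (xs ! 0)"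
proof (cases "xs = []")
  case True then show ?thesis by simp
next
  case False
  have "\<forall>i. i < length xs \<longrightarrow> xs ! i = xs ! 0"
  proof
    fix i show "i < length xs \<longrightarrow> xs ! i = xs ! 0"
    proof (induction i)
      case (Suc i)
      show ?case
      proof
        assume "Suc i < length xs"
        hence "xs ! Suc i = rotate1 xs ! i" using nth_rotate1[of i xs] by simp
        also have "\<dots> = xs ! i" using assms by simp
        finally show "xs ! Suc i = xs ! 0" using Suc \<open>Suc i < length xs\<close> by simp
      qed
    qed simp
  qed
  thus ?thesis by (intro replicate_eqI) (auto simp: in_set_conv_nth)
qed

lemma sum_list_rotate1: "sum_list (rotate1 xs) = sum_list (xs :: nat list)"
  by (cases xs) auto

lemma cp_mod_q:
  assumes q: "prime q" "coprime q N" and A: "A \<in> P" and z: "z < N"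
  shows "cp A q z mod int q = (if z \<in> mu q A then 1 else 0)"
proof -
  have Asub: "A \<subseteq> {..<N}" and Afin: "finite A" using A blk_sub finB by auto
  have q1: "q > 1" using q prime_gt_1_nat by blast
  have nk: "card (L A q z) mod q = card {xs\<in>L A q z. rotate1 xs = xs} mod q"
    by (rule necklace[OF q(1) finL[OF Afin]]) (auto simp: L_def sum_list_rotate1)
  have fixeq: "{xs\<in>L A q z. rotate1 xs = xs} = (\<lambda>x. replicate q x) ` {x\<in>A. q * x mod N = z}"
  proof (rule Set.set_eqI)
    fix xs show "xs \<in> {xs\<in>L A q z. rotate1 xs = xs} \<longleftrightarrow> xs \<in> (\<lambda>x. replicate q x) ` {x\<in>A. q * x mod N = z}"
    proof
      assume h: "xs \<in> {xs\<in>L A q z. rotate1 xs = xs}"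
      have len: "length xs = q" using h unfolding L_def by auto
      have r1: "rotate1 xs = xs" using h by simp
      have "xs = replicate (length xs) (xs ! 0)" by (rule rot_fix_rep[OF r1])
      then obtain c where xr: "xs = replicate q c" using len by metis
      have "c \<in> A" using h xr q1 unfolding L_def by auto
      moreover have "q * c mod N = z" using h xr unfolding L_def by (auto simp: sum_list_replicate)
      ultimately show "xs \<in> (\<lambda>x. replicate q x) ` {x\<in>A. q * x mod N = z}" using xr by blast
    next
      assume "xs \<in> (\<lambda>x. replicate q x) ` {x\<in>A. q * x mod N = z}"
      then show "xs \<in> {xs\<in>L A q z. rotate1 xs = xs}" unfolding L_def by (auto simp: sum_list_replicate)
    qed
  qed
  have injr: "inj_on (\<lambda>x. replicate q x) {x\<in>A. q * x mod N = z}"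
    using q1 by (auto simp: inj_on_def replicate_eq_replicate)
  have inj: "inj_on (\<lambda>x. q * x mod N) {..<N}"
  proof (rule inj_onI)
    fix x y assume "x \<in> {..<N}" "y \<in> {..<N}" "q * x mod N = q * y mod N"
    hence "[q * x = q * y] (mod N)" "x < N" "y < N" unfolding cong_def by auto
    hence "[x = y] (mod N)" "x < N" "y < N" using cong_mult_lcancel_nat q(2) by auto
    thus "x = y" unfolding cong_def by simp
  qed
  have cardf: "card {x\<in>A. q * x mod N = z} = (if z \<in> mu q A then 1 else 0)"
  proof (cases "z \<in> mu q A")
    case True
    then obtain x where x: "x \<in> A" "q * x mod N = z" unfolding mu_def by blast
    have "{x\<in>A. q * x mod N = z} = {x}"
    proof -
      { fix y assume "y \<in> A" "q * y mod N = z"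
        moreover have "y \<in> {..<N}" "x \<in> {..<N}" using \<open>y \<in> A\<close> x(1) Asub by auto
        ultimately have "y = x" using inj_onD[OF inj, of y x] x(2) by simp }
      thus ?thesis using x by blast
    qed
    thus ?thesis using True by simp
  next
    case False
    hence e: "{x\<in>A. q * x mod N = z} = {}" unfolding mu_def by blast
    have "card {x\<in>A. q * x mod N = z} = 0" by (subst e) simp
    thus ?thesis using False by simp
  qed
  have "cp A q z = int (card (L A q z))" using cp_count[OF Asub Afin z] .
  hence "cp A q z mod int q = int (card (L A q z) mod q)" by (simp add: zmod_int)
  also have "\<dots> = int (card {x\<in>A. q * x mod N = z} mod q)"
    using nk fixeq card_image[OF injr] by simp
  also have "\<dots> = (if z \<in> mu q A then 1 else 0)" using cardf q1 by auto
  finally show ?thesis .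
qed

definition ub :: "nat set \<Rightarrow> bool" where
  "ub X \<longleftrightarrow> X \<subseteq> {..<N} \<and> (\<forall>y\<in>X. \<exists>B\<in>P. y \<in> B \<and> B \<subseteq> X)"

lemma ub_blk: "B \<in> P \<Longrightarrow> ub B" unfolding ub_def using blk_sub by blast

lemma mu_prime_blk:
  assumes q: "prime q" "coprime q N" and A: "A \<in> P"
  shows "ub (mu q A)"
  unfolding ub_def
proof (intro conjI ballI)
  show "mu q A \<subseteq> {..<N}" by (rule mu_sub)
  fix y assume y: "y \<in> mu q A"
  have yN: "y < N" using y mu_sub by auto
  obtain B where B: "B \<in> P" "y \<in> B" using cover[OF yN] by blast
  have "B \<subseteq> mu q A"
  proof
    fix z assume z: "z \<in> B"
    have zN: "z < N" using z B blk_sub by auto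
    have "cp A q z = cp A q y" using S_const[OF cp_S[OF A] B(1) z B(2)] .
    hence "cp A q z mod int q = 1" using cp_mod_q[OF q A yN] y by simp
    thus "z \<in> mu q A" using cp_mod_q[OF q A zN] by (auto split: if_splits)
  qed
  thus "\<exists>B\<in>P. y \<in> B \<and> B \<subseteq> mu q A" using B by blast
qed

lemma mu_prime_ub:
  assumes q: "prime q" "coprime q N" and X: "ub X"
  shows "ub (mu q X)"
  unfolding ub_def
proof (intro conjI ballI)
  show "mu q X \<subseteq> {..<N}" by (rule mu_sub)
  fix y assume "y \<in> mu q X"
  then obtain x where x: "x \<in> X" "y = q * x mod N" unfolding mu_def by auto
  obtain B where B: "B \<in> P" "x \<in> B" "B \<subseteq> X" using X x unfolding ub_def by blast
  have "y \<in> mu q B" using x B unfolding mu_def by auto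
  then obtain C where C: "C \<in> P" "y \<in> C" "C \<subseteq> mu q B" using mu_prime_blk[OF q B(1)] unfolding ub_def by blast
  have "mu q B \<subseteq> mu q X" using B unfolding mu_def by auto
  thus "\<exists>B\<in>P. y \<in> B \<and> B \<subseteq> mu q X" using C by blast
qed

lemma mu_mult: "mu (a * b) X = mu a (mu b X)"
  unfolding mu_def image_image by (intro image_cong refl) (simp add: mod_mult_right_eq mult.assoc)

lemma mu_one: "X \<subseteq> {..<N} \<Longrightarrow> mu 1 X = X"
  unfolding mu_def by (auto simp: subset_iff image_iff)

lemma mu_unit_ub:
  assumes "coprime m N" "m > 0" "ub X"
  shows "ub (mu m X)"
  using assms
proof (induction m rule: less_induct)
  case (less m)
  show ?case
  proof (cases "m = 1")
    case True then show ?thesis using less.prems mu_one unfolding ub_def by auto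
  next
    case False
    then obtain q where q: "prime q" "q dvd m" using prime_factor_nat by blast
    then obtain m' where m': "m = q * m'" by blast
    have m'p: "coprime m' N" "m' > 0" using m' less.prems by auto
    have "1 * m' < q * m'" using prime_gt_1_nat[OF q(1)] m'p(2) by (intro mult_strict_right_mono) auto
    hence "m' < m" using m' by simp
    moreover note m'p
    ultimately have "ub (mu m' X)" using less.IH less.prems by blast
    moreover have "coprime q N" using m' less.prems by auto
    ultimately show ?thesis using mu_prime_ub q m' mu_mult by simp
  qed
qed

lemma mu_unit_blk:
  assumes m: "coprime m N" "m > 0" and A: "A \<in> P"
  shows "mu m A \<in> P"
proof -
  define m' where "m' = m ^ (totient N - 1)"
  have "[m ^ totient N = 1] (mod N)" using euler_theorem[of m N] m by (simp add: coprime_commute)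
  moreover have "m ^ totient N = m' * m"
  proof -
    have "totient N = Suc (totient N - 1)" using N1 by simp
    hence "m ^ totient N = m * m ^ (totient N - 1)" by (metis power_Suc)
    thus ?thesis unfolding m'_def by simp
  qed
  ultimately have inv: "[m' * m = 1] (mod N)" by simp
  have m'c: "coprime m' N" "m' > 0" using m unfolding m'_def by auto
  have ubA: "ub (mu m A)" using mu_unit_ub[OF m ub_blk[OF A]] .
  obtain a where a: "a \<in> A" using blk_ne[OF A] by blast
  have "m * a mod N \<in> mu m A" using a unfolding mu_def by auto
  then obtain B where B: "B \<in> P" "m * a mod N \<in> B" "B \<subseteq> mu m A" using ubA unfolding ub_def by blast
  have invx: "m' * m * x mod N = x" if "x < N" for x
  proof -
    have "[m' * m * x = 1 * x] (mod N)" using inv by (intro cong_mult) auto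
    thus ?thesis using that unfolding cong_def by auto
  qed
  have hback: "mu m' (mu m X) = X" if hX: "X \<subseteq> {..<N}" for X
  proof -
    have "mu m' (mu m X) = mu (m' * m) X" by (simp add: mu_mult)
    also have "\<dots> = id ` X" unfolding mu_def
      by (intro image_cong refl) (use hX invx in auto)
    finally show ?thesis by simp
  qed
  have ubB: "ub (mu m' B)" using mu_unit_ub[OF m'c ub_blk[OF B(1)]] .
  have "mu m' B \<subseteq> mu m' (mu m A)" using B(3) unfolding mu_def by (intro image_mono)
  hence "mu m' B \<subseteq> A" using hback[OF blk_sub[OF A]] by simp
  have "a \<in> mu m' B"
  proof -
    have aN: "a < N" using a blk_sub[OF A] by auto
    have "m' * (m * a mod N) mod N = m' * m * a mod N" by (simp add: mod_mult_right_eq mult.assoc)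
    also have "\<dots> = a" using invx[OF aN] .
    finally show ?thesis using B(2) unfolding mu_def by (metis image_eqI)
  qed
  have "A \<subseteq> mu m' B"
  proof -
    obtain C where C: "C \<in> P" "a \<in> C" "C \<subseteq> mu m' B" using ubB \<open>a \<in> mu m' B\<close> unfolding ub_def by blast
    have "C = A" using blk_eq[OF C(1) A C(2) a] .
    thus ?thesis using C by simp
  qed
  hence "mu m A \<subseteq> mu m (mu m' B)" unfolding mu_def by auto
  also have "mu m (mu m' B) = B"
  proof -
    have "mu m (mu m' B) = mu (m' * m) B" by (simp add: mu_mult mult.commute)
    also have "\<dots> = mu m' (mu m B)" by (simp add: mu_mult)
    finally show ?thesis using hback[OF blk_sub[OF B(1)]] by simp
  qed
  finally have "mu m A \<subseteq> B" .
  hence "mu m A = B" using B(3) by auto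
  thus ?thesis using B by simp
qed

end


locale lay =
  fixes p n N :: nat
  assumes pp: "prime p" and n1: "n \<ge> 1" and NN: "N = p ^ n"
begin

lemma p1: "p > 1" using pp prime_gt_1_nat by blast
lemma N1: "N > 1" using p1 n1 NN by (metis one_less_power less_le_trans zero_less_one le_less)
lemma N0: "N > 0" using N1 by simp

lemma gcd_pk:
  assumes k: "k \<le> n" and h: "coprime h p"
  shows "gcd (p ^ k * h) N = p ^ k"
proof -
  have "N = p ^ k * p ^ (n - k)" using k NN by (simp add: power_add[symmetric])
  hence "gcd (p ^ k * h) N = p ^ k * gcd h (p ^ (n - k))" by (simp add: gcd_mult_distrib_nat)
  also have "gcd h (p ^ (n - k)) = 1" using h by simp
  finally show ?thesis by simp
qed

lemma Bset_char:
  assumes k: "k \<le> n"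
  shows "Bset p N k = {x. x < N \<and> gcd x N = p ^ k}"
proof (rule Set.set_eqI)
  fix x show "x \<in> Bset p N k \<longleftrightarrow> x \<in> {x. x < N \<and> gcd x N = p ^ k}"
  proof
    assume "x \<in> Bset p N k"
    then obtain h where h: "h < N" "coprime h N" "x = p ^ k * h mod N"
      unfolding Bset_def generators_def grp_def by auto
    have "coprime h p" using h(2) NN n1 by (simp add: coprime_commute)
    have "gcd x N = gcd (p ^ k * h) N" using h(3) N0 by (simp add: gcd_mod_left)
    also have "\<dots> = p ^ k" using gcd_pk[OF k \<open>coprime h p\<close>] .
    finally show "x \<in> {x. x < N \<and> gcd x N = p ^ k}" using h(3) N0 by simp
  next
    assume "x \<in> {x. x < N \<and> gcd x N = p ^ k}"
    hence x: "x < N" "gcd x N = p ^ k" by auto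
    show "x \<in> Bset p N k"
    proof (cases "k = n")
      case True
      hence "N dvd x" using x NN by (metis gcd_dvd1)
      hence "x = 0" using x(1) by (metis dvd_imp_le not_less neq0_conv)
      moreover have "1 \<in> generators N" unfolding generators_def grp_def using N1 by auto
      ultimately show ?thesis unfolding Bset_def using True NN by (auto simp: image_iff intro!: bexI[of _ 1])
    next
      case False
      hence kn: "k < n" using k by simp
      have "p ^ k dvd x" using x(2) by (metis gcd_dvd1)
      then obtain h where hx: "x = p ^ k * h" by blast
      have "coprime h p"
      proof (rule ccontr)
        assume "\<not> coprime h p"
        hence "p dvd h" using pp by (metis coprime_commute prime_imp_coprime)
        hence "p ^ Suc k dvd x" using hx by auto
        moreover have "p ^ Suc k dvd N" using kn NN le_imp_power_dvd[of "Suc k" n p] by simp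
        ultimately have "p ^ Suc k dvd p ^ k" using x(2) by (metis gcd_greatest)
        thus False using p1 power_dvd_imp_le by fastforce
      qed
      hence "coprime h N" using NN by (simp add: coprime_commute)
      moreover have "h < N"
      proof -
        have "1 \<le> p ^ k" using p1 by simp
        hence "1 * h \<le> p ^ k * h" by (rule mult_right_mono) simp
        hence "h \<le> x" using hx by simp
        thus ?thesis using x by simp
      qed
      moreover have "x = p ^ k * h mod N" using hx x by simp
      ultimately show ?thesis unfolding Bset_def generators_def grp_def by auto
    qed
  qed
qed

lemma gcd_layer: "x < N \<Longrightarrow> \<exists>k\<le>n. gcd x N = p ^ k"
proof -
  have "gcd x N dvd p ^ n" using NN by (metis gcd_dvd2)
  thus "\<exists>k\<le>n. gcd x N = p ^ k" using divides_primepow_nat[OF pp] by blast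
qed

lemma in_some_B: "x < N \<Longrightarrow> \<exists>k\<le>n. x \<in> Bset p N k"
  using gcd_layer Bset_char by blast

lemma B_disj: "i \<le> n \<Longrightarrow> j \<le> n \<Longrightarrow> x \<in> Bset p N i \<Longrightarrow> x \<in> Bset p N j \<Longrightarrow> i = j"
  using Bset_char p1 by (auto dest: power_inject_exp[of p])

lemma B_sub: "k \<le> n \<Longrightarrow> Bset p N k \<subseteq> {..<N}" using Bset_char by auto

lemma Bn: "Bset p N n = {0}"
proof -
  have "Bset p N n = {x. x < N \<and> gcd x N = p ^ n}" using Bset_char by simp
  also have "\<dots> = {0}"
  proof (rule Set.set_eqI)
    fix x show "x \<in> {x. x < N \<and> gcd x N = p ^ n} \<longleftrightarrow> x \<in> {0}"
    proof
      assume "x \<in> {x. x < N \<and> gcd x N = p ^ n}"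
      hence "N dvd x" "x < N" using NN by (auto, metis gcd_dvd1)
      thus "x \<in> {0}" by (metis dvd_imp_le not_less neq0_conv singletonI)
    qed (use N0 NN in auto)
  qed
  finally show ?thesis .
qed

lemma B_unit:
  assumes k: "k \<le> n" and x: "x \<in> Bset p N k" and w: "coprime w N"
  shows "w * x mod N \<in> Bset p N k"
proof -
  have "gcd (w * x mod N) N = gcd (w * x) N" using N0 by (simp add: gcd_mod_left)
  also have "\<dots> = gcd x N" using w coprime_commute gcd_mult_left_left_cancel by metis
  finally show ?thesis using x Bset_char[OF k] N0 by auto
qed

lemma B_trans:
  assumes k: "k \<le> n" and x: "x \<in> Bset p N k" and y: "y \<in> Bset p N k"
  shows "\<exists>w. coprime w N \<and> y = w * x mod N"
proof -
  obtain h where h: "coprime h N" "x = p ^ k * h mod N" using x unfolding Bset_def generators_def by auto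
  obtain h' where h': "coprime h' N" "y = p ^ k * h' mod N" using y unfolding Bset_def generators_def by auto
  define w where "w = h' * h ^ (totient N - 1)"
  have "coprime w N" unfolding w_def using h h' by simp
  moreover have "[h ^ (totient N - 1) * h = 1] (mod N)"
  proof -
    have "totient N = Suc (totient N - 1)" using N0 by simp
    hence "h ^ totient N = h ^ (totient N - 1) * h" by (metis power_Suc2)
    moreover have "[h ^ totient N = 1] (mod N)" using euler_theorem[of h N] h(1) by simp
    ultimately show ?thesis by simp
  qed
  hence "w * x mod N = y"
  proof -
    assume inv: "[h ^ (totient N - 1) * h = 1] (mod N)"
    have "w * x mod N = w * (p ^ k * h) mod N" using h(2) by (simp add: mod_mult_right_eq)
    also have "w * (p ^ k * h) = (h ^ (totient N - 1) * h) * (p ^ k * h')" unfolding w_def by (simp add: ac_simps)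
    also have "\<dots> mod N = (1 * (p ^ k * h')) mod N" using inv by (metis cong_def cong_mult cong_refl)
    finally show ?thesis using h'(2) by simp
  qed
  ultimately show ?thesis by metis
qed

lemma card_B:
  assumes k: "k < n"
  shows "card (Bset p N k) = totient (p ^ (n - k))"
proof -
  have "Bset p N k = (\<lambda>h. p ^ k * h) ` totatives (p ^ (n - k))"
  proof (rule Set.set_eqI)
    fix x show "x \<in> Bset p N k \<longleftrightarrow> x \<in> (\<lambda>h. p ^ k * h) ` totatives (p ^ (n - k))"
    proof
      assume "x \<in> Bset p N k"
      hence x: "x < N" "gcd x N = p ^ k" using Bset_char k by auto
      have "p ^ k dvd x" using x(2) by (metis gcd_dvd1)
      then obtain h where hx: "x = p ^ k * h" by blast
      have Ne: "N = p ^ k * p ^ (n - k)" using k NN by (simp add: power_add[symmetric])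
      have g: "gcd h (p ^ (n - k)) = 1"
      proof -
        have "gcd (p ^ k * h) N = p ^ k * gcd h (p ^ (n - k))" using Ne by (simp add: gcd_mult_distrib_nat)
        hence "p ^ k * gcd h (p ^ (n - k)) = p ^ k * 1" using x(2) hx by simp
        thus ?thesis using p1 by simp
      qed
      from x(1) have "p ^ k * h < p ^ k * p ^ (n - k)" by (simp only: hx Ne)
      hence "h < p ^ (n - k)" by (meson mult_le_mono2 not_le)
      moreover have "h > 0"
      proof (rule ccontr)
        assume "\<not> h > 0" hence "h = 0" by simp
        hence "gcd h (p ^ (n - k)) = p ^ (n - k)" by simp
        thus False using g k p1 one_less_power[of p "n - k"] by simp
      qed
      moreover have "coprime h (p ^ (n - k))" using g coprime_iff_gcd_eq_1 by blast
      ultimately have "h \<in> totatives (p ^ (n - k))" by (simp add: in_totatives_iff)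
      thus "x \<in> (\<lambda>h. p ^ k * h) ` totatives (p ^ (n - k))" using hx by blast
    next
      assume "x \<in> (\<lambda>h. p ^ k * h) ` totatives (p ^ (n - k))"
      then obtain h where h: "h \<in> totatives (p ^ (n - k))" "x = p ^ k * h" by blast
      have hle: "h \<le> p ^ (n - k)" and hc: "coprime h (p ^ (n - k))" using h by (auto simp: in_totatives_iff)
      have hne: "h \<noteq> p ^ (n - k)"
      proof
        assume "h = p ^ (n - k)"
        hence "coprime (p ^ (n - k)) (p ^ (n - k))" using hc by simp
        thus False using k p1 by simp
      qed
      have Ne: "N = p ^ k * p ^ (n - k)" using k NN by (simp add: power_add[symmetric])
      have "h < p ^ (n - k)" using hle hne by simp
      hence "p ^ k * h < p ^ k * p ^ (n - k)" using p1 by (intro mult_strict_left_mono) auto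
      hence "x < N" using h(2) Ne by simp
      moreover have "coprime h p" using hc k by simp
      ultimately show "x \<in> Bset p N k" using gcd_pk[of k h] k h(2) Bset_char by simp
    qed
  qed
  moreover have "inj_on (\<lambda>h. p ^ k * h) (totatives (p ^ (n - k)))" using p1 by (intro inj_onI) simp
  ultimately show ?thesis by (simp add: card_image totient_def)
qed

end


lemma tot_pp: "prime (p::nat) \<Longrightarrow> k < n \<Longrightarrow> totient (p ^ (n - k)) = (p - 1) * p ^ (n - 1 - k)"
proof -
  assume "prime p" "k < n"
  hence "n - k = Suc (n - 1 - k)" by simp
  thus ?thesis using totient_prime_power_Suc[OF \<open>prime p\<close>, of "n - 1 - k"] by (simp add: mult.commute)
qed

lemma NT1:
  fixes p n r e :: nat
  assumes pp: "prime p" and fin: "finite T" and Tn: "T \<subseteq> {..<n}" and i: "i \<in> T" and j: "j \<in> T" and ij: "i < j"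
    and eq: "r * p ^ e = (\<Sum>k\<in>T. totient (p ^ (n - k)))" and dv: "r dvd totient (p ^ n)"
  shows False
proof -
  have p1: "p > 1" using pp prime_gt_1_nat by blast
  have Tne: "T \<noteq> {}" using i by auto
  define jm where "jm = Max T"
  have jmT: "jm \<in> T" using fin Tne jm_def by simp
  have jmn: "jm < n" using jmT Tn by auto
  have kle: "k \<le> jm" if "k \<in> T" for k using fin that jm_def by simp
  have ijm: "i < jm" using ij kle[OF j] by simp
  define m where "m = n - 1 - jm"
  define Y where "Y = (\<Sum>k\<in>T. p ^ (jm - k))"
  have trm: "totient (p ^ (n - k)) = ((p - 1) * p ^ m) * p ^ (jm - k)" if "k \<in> T" for k
  proof -
    have "k < n" using that Tn by auto
    hence "totient (p ^ (n - k)) = (p - 1) * p ^ (n - 1 - k)" using tot_pp[OF pp] by simp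
    also have "n - 1 - k = m + (jm - k)" using kle[OF that] jmn unfolding m_def by simp
    finally show ?thesis by (simp add: power_add)
  qed
  have S: "(\<Sum>k\<in>T. totient (p ^ (n - k))) = ((p - 1) * p ^ m) * Y"
    unfolding Y_def sum_distrib_left using trm by (intro sum.cong) auto
  have Ysplit: "Y = 1 + (\<Sum>k\<in>T - {jm}. p ^ (jm - k))"
    unfolding Y_def using sum.remove[OF fin jmT, of "\<lambda>k. p ^ (jm - k)"] by simp
  have "p dvd (\<Sum>k\<in>T - {jm}. p ^ (jm - k))"
  proof (rule dvd_sum)
    fix k assume "k \<in> T - {jm}"
    hence "k < jm" using kle by force
    hence e1: "jm - k = Suc (jm - k - 1)" by simp
    show "p dvd p ^ (jm - k)" by (subst e1) simp
  qed
  then obtain t where t: "(\<Sum>k\<in>T - {jm}. p ^ (jm - k)) = p * t" by blast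
  have Yt: "Y = 1 + p * t" using Ysplit t by simp
  have "t > 0"
  proof -
    have "i \<in> T - {jm}" using i ijm by auto
    hence "p ^ (jm - i) \<le> (\<Sum>k\<in>T - {jm}. p ^ (jm - k))"
      using fin by (intro member_le_sum) auto
    moreover have "p ^ (jm - i) > 0" using p1 by simp
    ultimately show ?thesis using t by (cases t) auto
  qed
  have copY: "coprime Y p"
  proof -
    have "\<not> p dvd (1 + p * t)"
    proof
      assume "p dvd (1 + p * t)"
      moreover have "p dvd p * t" by simp
      ultimately have "p dvd (1 + p * t - p * t)" by (rule dvd_diff_nat)
      hence "p dvd 1" by simp
      thus False using p1 by simp
    qed
    hence "coprime (1 + p * t) p" using prime_imp_coprime[OF pp] coprime_commute by blast
    thus ?thesis using Yt by simp
  qed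
  obtain c where c: "totient (p ^ n) = r * c" using dv by blast
  have nm: "n - 1 = m + jm" using jmn unfolding m_def by simp
  have "totient (p ^ n) = (p - 1) * p ^ (n - 1)" using tot_pp[OF pp, of 0 n] jmn by simp
  also have "\<dots> = (p - 1) * p ^ (m + jm)" by (simp only: nm)
  also have "\<dots> = ((p - 1) * p ^ m) * p ^ jm" by (simp add: power_add)
  finally have totn: "totient (p ^ n) = ((p - 1) * p ^ m) * p ^ jm" .
  have "((p - 1) * p ^ m) * (Y * c) = ((p - 1) * p ^ m) * (p ^ (jm + e))"
  proof -
    have "((p - 1) * p ^ m) * (Y * c) = (r * p ^ e) * c" using eq S by simp
    also have "\<dots> = totient (p ^ n) * p ^ e" using c by simp
    also have "\<dots> = ((p - 1) * p ^ m) * (p ^ (jm + e))" using totn by (simp add: power_add)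
    finally show ?thesis .
  qed
  moreover have "(p - 1) * p ^ m \<noteq> 0" using p1 by simp
  ultimately have "Y * c = p ^ (jm + e)" by simp
  hence "Y dvd p ^ (jm + e)" by (intro dvdI[of _ _ c]) simp
  moreover have "coprime Y (p ^ (jm + e))" using copY by simp
  ultimately have "Y = 1"
  proof -
    assume d: "Y dvd p ^ (jm + e)" and cp: "coprime Y (p ^ (jm + e))"
    have "gcd Y (p ^ (jm + e)) = Y" using d by (simp add: gcd_nat.absorb1)
    moreover have "gcd Y (p ^ (jm + e)) = 1" using cp coprime_iff_gcd_eq_1 by blast
    ultimately show ?thesis by simp
  qed
  thus False using Yt \<open>t > 0\<close> p1 by simp
qed

lemma NT2:
  fixes p n r e k :: nat
  assumes pp: "prime p" and k: "k < n" and eq: "r * p ^ e = totient (p ^ (n - k))"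
  shows "e \<le> n - 1 - k \<and> r = totient (p ^ (n - k - e))"
proof -
  have p1: "p > 1" using pp prime_gt_1_nat by blast
  have t: "totient (p ^ (n - k)) = (p - 1) * p ^ (n - 1 - k)" using tot_pp[OF pp k] .
  have "coprime (p ^ e) (p - 1)"
  proof -
    have "coprime p (p - 1)"
    proof -
      have "\<not> p dvd (p - 1)"
      proof
        assume d: "p dvd (p - 1)"
        have "p - 1 > 0" "p - 1 < p" using p1 by auto
        hence "p \<le> p - 1" using dvd_imp_le[OF d] by blast
        thus False using \<open>p - 1 < p\<close> by linarith
      qed
      thus ?thesis using pp prime_imp_coprime by blast
    qed
    thus ?thesis by simp
  qed
  moreover have "p ^ e dvd (p - 1) * p ^ (n - 1 - k)"
  proof -
    have "p ^ e dvd r * p ^ e" by simp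
    thus ?thesis using eq t by simp
  qed
  ultimately have "p ^ e dvd p ^ (n - 1 - k)" using coprime_dvd_mult_right_iff by blast
  hence le: "e \<le> n - 1 - k" using power_dvd_imp_le p1 by blast
  define d where "d = n - 1 - k - e"
  have de: "n - 1 - k = d + e" using le unfolding d_def by simp
  have "r * p ^ e = ((p - 1) * p ^ d) * p ^ e"
  proof -
    have "r * p ^ e = (p - 1) * p ^ (n - 1 - k)" using eq t by simp
    also have "\<dots> = (p - 1) * p ^ (d + e)" by (simp only: de)
    also have "\<dots> = ((p - 1) * p ^ d) * p ^ e" by (simp add: power_add)
    finally show ?thesis .
  qed
  moreover have "p ^ e > 0" using p1 by simp
  ultimately have "r = (p - 1) * p ^ d" using p1 by auto
  hence "r = (p - 1) * p ^ (n - 1 - k - e)" unfolding d_def .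
  also have "\<dots> = totient (p ^ (n - k - e))"
  proof -
    have "n - k - e = Suc (n - 1 - k - e)" using le k by simp
    thus ?thesis using totient_prime_power_Suc[OF pp, of "n - 1 - k - e"] by (simp add: mult.commute)
  qed
  finally show ?thesis using le by simp
qed


locale mt = upart N P + lay p n N for N P p n +
  fixes g :: nat
  assumes oddp: "odd p" and cardp: "\<forall>A\<in>P. \<exists>e. card A = p ^ e"
    and prim: "residue_primroot N g"
begin

abbreviation M :: "nat \<Rightarrow> nat set \<Rightarrow> nat set" where
  "M i X \<equiv> mu (g ^ i) X"

lemma g_cop: "coprime g N" using prim unfolding residue_primroot_def by (simp add: coprime_commute)
lemma gi_cop: "coprime (g ^ i) N" using g_cop by simp
lemma gi_pos: "g ^ i > 0"
proof -
  have "g \<noteq> 0" using g_cop upart.N1[OF upart_axioms] by (cases "g = 0") auto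
  thus ?thesis by simp
qed

lemma M_blk: "A \<in> P \<Longrightarrow> M i A \<in> P" using mu_unit_blk[OF gi_cop gi_pos] by blast

lemma M_add: "M i (M j X) = M (i + j) X"
  by (simp add: mu_mult[symmetric] power_add)

lemma mu_cong1:
  assumes "[c = 1] (mod N)" "X \<subseteq> {..<N}"
  shows "mu c X = X"
proof -
  have "c * x mod N = x" if "x \<in> X" for x
  proof -
    have "[c * x = 1 * x] (mod N)" using assms(1) by (intro cong_mult) auto
    thus ?thesis using that assms(2) unfolding cong_def by auto
  qed
  hence "mu c X = id ` X" unfolding mu_def by (intro image_cong) auto
  thus ?thesis by simp
qed

lemma M_tot: "X \<subseteq> {..<N} \<Longrightarrow> M (totient N * t) X = X"
proof -
  assume X: "X \<subseteq> {..<N}"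
  have "[g ^ totient N = 1] (mod N)" using euler_theorem[of g N] g_cop by simp
  hence "[(g ^ totient N) ^ t = 1 ^ t] (mod N)" by (rule cong_pow)
  hence "[g ^ (totient N * t) = 1] (mod N)" by (simp add: power_mult)
  thus ?thesis using mu_cong1 X by blast
qed

lemma M_0: "X \<subseteq> {..<N} \<Longrightarrow> M 0 X = X" using mu_one by simp

definition r :: "nat set \<Rightarrow> nat" where
  "r A = (LEAST s. 0 < s \<and> M s A = A)"

lemma tot_pos: "totient N > 0" using N1 by simp

lemma r_props:
  assumes A: "A \<in> P"
  shows "0 < r A" "M (r A) A = A" "\<And>s. 0 < s \<Longrightarrow> s < r A \<Longrightarrow> M s A \<noteq> A"
proof -
  have ex: "0 < totient N \<and> M (totient N) A = A" using tot_pos M_tot[of A 1] blk_sub[OF A] by simp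
  have "0 < r A \<and> M (r A) A = A" unfolding r_def by (rule LeastI[of _ "totient N"]) (rule ex)
  thus "0 < r A" "M (r A) A = A" by auto
  show "\<And>s. 0 < s \<Longrightarrow> s < r A \<Longrightarrow> M s A \<noteq> A" unfolding r_def using not_less_Least by blast
qed

lemma M_cancel:
  assumes A: "A \<subseteq> {..<N}" and ab: "a \<le> b" and e: "M a A = M b A"
  shows "M (b - a) A = A"
proof -
  define c where "c = totient N * a - a"
  have "1 \<le> totient N" using tot_pos by (simp add: Suc_le_eq)
  hence "1 * a \<le> totient N * a" by (rule mult_le_mono1)
  hence ca: "c + a = totient N * a" unfolding c_def by simp
  have "M c (M a A) = A" using M_add M_tot[OF A] ca by simp
  moreover have "M c (M b A) = M (b - a) A"
  proof -
    have "M c (M b A) = M (c + b) A" by (rule M_add)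
    also have "c + b = (b - a) + totient N * a" using ca ab by simp
    also have "M \<dots> A = M (b - a) (M (totient N * a) A)" by (rule M_add[symmetric])
    also have "\<dots> = M (b - a) A" using M_tot[OF A] by simp
    finally show ?thesis .
  qed
  ultimately show ?thesis using e by simp
qed

lemma M_rt: "A \<in> P \<Longrightarrow> M (r A * t) A = A"
proof (induction t)
  case 0 then show ?case using M_0 blk_sub by simp
next
  case (Suc t)
  have "M (r A * Suc t) A = M (r A) (M (r A * t) A)" by (simp add: M_add add.commute)
  then show ?case using Suc r_props(2)[OF Suc.prems] by simp
qed

lemma M_mod: "A \<in> P \<Longrightarrow> M i A = M (i mod r A) A"
proof -
  assume A: "A \<in> P"
  have "M i A = M (i mod r A + r A * (i div r A)) A" by simp
  also have "\<dots> = M (i mod r A) (M (r A * (i div r A)) A)" by (rule M_add[symmetric])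
  finally have "M i A = M (i mod r A) (M (r A * (i div r A)) A)" .
  thus ?thesis using M_rt[OF A] by simp
qed

lemma r_dvd: "A \<in> P \<Longrightarrow> r A dvd totient N"
proof -
  assume A: "A \<in> P"
  have "M (totient N mod r A) A = M (totient N) A" using M_mod[OF A] by simp
  also have "\<dots> = A" using M_tot[of A 1] blk_sub[OF A] by simp
  finally have "M (totient N mod r A) A = A" .
  moreover have "totient N mod r A < r A" using r_props(1)[OF A] by simp
  ultimately have "totient N mod r A = 0" using r_props(3)[OF A] by blast
  thus ?thesis by (simp add: mod_eq_0_iff_dvd)
qed

lemma M_meet:
  assumes A: "A \<in> P" and y: "y \<in> A"
  shows "(g ^ u * y mod N \<in> A) \<longleftrightarrow> M u A = A"
proof
  assume h: "g ^ u * y mod N \<in> A"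
  have "g ^ u * y mod N \<in> M u A" using y unfolding mu_def by blast
  thus "M u A = A" using blk_eq[OF M_blk[OF A] A _ h] by blast
next
  assume "M u A = A"
  moreover have "g ^ u * y mod N \<in> M u A" using y unfolding mu_def by blast
  ultimately show "g ^ u * y mod N \<in> A" by simp
qed

lemma uexp_r:
  assumes A: "A \<in> P" and y: "y \<in> A"
  shows "uexp N g A y = r A"
  unfolding uexp_def r_def using M_meet[OF A y] by simp

definition Orb :: "nat set \<Rightarrow> nat set" where
  "Orb A = (\<lambda>(i, x). g ^ i * x mod N) ` ({..<r A} \<times> A)"

lemma M_card: "X \<subseteq> {..<N} \<Longrightarrow> card (M i X) = card X"
proof -
  assume X: "X \<subseteq> {..<N}"
  have "inj_on (\<lambda>x. g ^ i * x mod N) X"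
  proof (rule inj_onI)
    fix x y assume "x \<in> X" "y \<in> X" "g ^ i * x mod N = g ^ i * y mod N"
    hence "[g ^ i * x = g ^ i * y] (mod N)" "x < N" "y < N" using X unfolding cong_def by auto
    hence "[x = y] (mod N)" "x < N" "y < N" using cong_mult_lcancel_nat gi_cop by auto
    thus "x = y" unfolding cong_def by simp
  qed
  thus ?thesis unfolding mu_def by (simp add: card_image)
qed

lemma orb_card:
  assumes A: "A \<in> P"
  shows "card (Orb A) = r A * card A"
proof -
  have Asub: "A \<subseteq> {..<N}" using blk_sub[OF A] .
  have inj: "inj_on (\<lambda>(i, x). g ^ i * x mod N) ({..<r A} \<times> A)"
  proof (rule inj_onI, clarify)
    fix i x j y assume i: "i < r A" and x: "x \<in> A" and j: "j < r A" and y: "y \<in> A"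
      and e: "g ^ i * x mod N = g ^ j * y mod N"
    have "g ^ i * x mod N \<in> M i A" using x unfolding mu_def by blast
    moreover have "g ^ i * x mod N \<in> M j A" using y e unfolding mu_def by auto
    ultimately have Mij: "M i A = M j A" using blk_eq[OF M_blk[OF A] M_blk[OF A]] by blast
    have ij: "i = j"
    proof (rule ccontr)
      assume "i \<noteq> j"
      show False
      proof (cases "i < j")
        case True
        have "M (j - i) A = A" using M_cancel[OF Asub _ Mij] True by simp
        moreover have "0 < j - i" "j - i < r A" using True j by auto
        ultimately show False using r_props(3)[OF A] by blast
      next
        case False
        hence "j < i" using \<open>i \<noteq> j\<close> by simp
        have "M (i - j) A = A" using M_cancel[OF Asub _ Mij[symmetric]] \<open>j < i\<close> by simp
        moreover have "0 < i - j" "i - j < r A" using \<open>j < i\<close> i by auto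
        ultimately show False using r_props(3)[OF A] by blast
      qed
    qed
    have "[g ^ i * x = g ^ i * y] (mod N)" using e ij unfolding cong_def by simp
    hence "[x = y] (mod N)" using cong_mult_lcancel_nat gi_cop by auto
    moreover have "x < N" "y < N" using x y Asub by auto
    ultimately have "x = y" unfolding cong_def by simp
    thus "i = j \<and> x = y" using ij by simp
  qed
  have "card (Orb A) = card ({..<r A} \<times> A)" unfolding Orb_def by (rule card_image[OF inj])
  also have "\<dots> = r A * card A" by (simp add: card_cartesian_product)
  finally show ?thesis .
qed

definition T :: "nat set \<Rightarrow> nat set" where
  "T A = {k. k \<le> n \<and> A \<inter> Bset p N k \<noteq> {}}"

lemma unit_pow:
  assumes w: "coprime w N"
  shows "\<exists>i. [w = g ^ i] (mod N)"
proof -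
  have "w mod N \<in> totatives N"
  proof -
    have "w mod N \<noteq> 0"
    proof
      assume "w mod N = 0"
      hence "N dvd w" by auto
      hence "N dvd gcd w N" by simp
      moreover have "gcd w N = 1" using w coprime_iff_gcd_eq_1 by blast
      ultimately show False using N1 by simp
    qed
    moreover have "coprime (w mod N) N" using w N0 by simp
    moreover have "w mod N \<le> N" using N0 by (simp add: less_imp_le)
    ultimately show ?thesis by (simp add: in_totatives_iff)
  qed
  hence "w mod N \<in> (\<lambda>i. g ^ i mod N) ` {..<totient N}"
    using residue_primroot_is_generator[OF N1 prim] unfolding bij_betw_def by simp
  then obtain i where "w mod N = g ^ i mod N" by blast
  thus ?thesis unfolding cong_def by blast
qed

lemma orb_eq:
  assumes A: "A \<in> P"
  shows "Orb A = (\<Union>k\<in>T A. Bset p N k)"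
proof (rule Set.set_eqI)
  have Asub: "A \<subseteq> {..<N}" using blk_sub[OF A] .
  fix z show "z \<in> Orb A \<longleftrightarrow> z \<in> (\<Union>k\<in>T A. Bset p N k)"
  proof
    assume "z \<in> Orb A"
    then obtain i x where x: "x \<in> A" "z = g ^ i * x mod N" unfolding Orb_def by auto
    obtain k where k: "k \<le> n" "x \<in> Bset p N k" using in_some_B x Asub by blast
    have "z \<in> Bset p N k" using B_unit[OF k gi_cop] x by simp
    moreover have "k \<in> T A" using k x unfolding T_def by auto
    ultimately show "z \<in> (\<Union>k\<in>T A. Bset p N k)" by blast
  next
    assume "z \<in> (\<Union>k\<in>T A. Bset p N k)"
    then obtain k x where k: "k \<le> n" "z \<in> Bset p N k" "x \<in> A" "x \<in> Bset p N k" unfolding T_def by blast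
    obtain w where w: "coprime w N" "z = w * x mod N" using B_trans[OF k(1) k(4) k(2)] by blast
    obtain i where i: "[w = g ^ i] (mod N)" using unit_pow[OF w(1)] by blast
    have "z = g ^ i * x mod N"
    proof -
      have "[w * x = g ^ i * x] (mod N)" using i by (intro cong_mult) auto
      thus ?thesis using w(2) unfolding cong_def by simp
    qed
    hence "z \<in> M i A" using k(3) unfolding mu_def by blast
    hence "z \<in> M (i mod r A) A" using M_mod[OF A] by simp
    then obtain x' where "x' \<in> A" "z = g ^ (i mod r A) * x' mod N" unfolding mu_def by blast
    moreover have "i mod r A < r A" using r_props(1)[OF A] by simp
    ultimately show "z \<in> Orb A" unfolding Orb_def by force
  qed
qed

lemma card_union_B:
  "card (\<Union>k\<in>T A. Bset p N k) = (\<Sum>k\<in>T A. card (Bset p N k))"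
proof (rule card_UN_disjoint)
  show "finite (T A)" unfolding T_def by simp
  show "\<forall>i\<in>T A. finite (Bset p N i)" unfolding T_def by (auto intro: finite_subset[OF B_sub])
  show "\<forall>i\<in>T A. \<forall>j\<in>T A. i \<noteq> j \<longrightarrow> Bset p N i \<inter> Bset p N j = {}"
    unfolding T_def using B_disj by blast
qed

lemma key_eq:
  assumes A: "A \<in> P" and A0: "A \<noteq> {0}"
  shows "T A \<subseteq> {..<n}" "r A * card A = (\<Sum>k\<in>T A. totient (p ^ (n - k)))"
proof -
  show Tn: "T A \<subseteq> {..<n}"
  proof
    fix k assume k: "k \<in> T A"
    show "k \<in> {..<n}"
    proof (rule ccontr)
      assume "k \<notin> {..<n}"
      hence "k = n" using k unfolding T_def by auto
      hence "0 \<in> A" using k Bn unfolding T_def by auto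
      hence "A = {0}" using blk_eq[OF A zeroP] by blast
      thus False using A0 by simp
    qed
  qed
  have "r A * card A = card (Orb A)" using orb_card[OF A] by simp
  also have "\<dots> = (\<Sum>k\<in>T A. card (Bset p N k))" using orb_eq[OF A] card_union_B by simp
  also have "\<dots> = (\<Sum>k\<in>T A. totient (p ^ (n - k)))"
    using Tn card_B by (intro sum.cong) auto
  finally show "r A * card A = (\<Sum>k\<in>T A. totient (p ^ (n - k)))" .
qed

end


context mt begin

lemma one_layer:
  assumes A: "A \<in> P" and i: "i \<le> n" and j: "j \<le> n"
    and ai: "A \<inter> Bset p N i \<noteq> {}" and aj: "A \<inter> Bset p N j \<noteq> {}"
  shows "i = j"
proof (rule ccontr)
  assume ne: "i \<noteq> j"
  show False
  proof (cases "A = {0}")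
    case True
    hence "0 \<in> Bset p N i" "0 \<in> Bset p N j" using ai aj by auto
    thus False using B_disj[OF i j] ne by blast
  next
    case False
    have Tn: "T A \<subseteq> {..<n}" and eq: "r A * card A = (\<Sum>k\<in>T A. totient (p ^ (n - k)))"
      using key_eq[OF A False] by auto
    obtain e where e: "card A = p ^ e" using cardp A by blast
    have fin: "finite (T A)" using Tn finite_subset by blast
    have iT: "i \<in> T A" and jT: "j \<in> T A" using i j ai aj unfolding T_def by auto
    have dv: "r A dvd totient (p ^ n)" using r_dvd[OF A] NN by simp
    have eq': "r A * p ^ e = (\<Sum>k\<in>T A. totient (p ^ (n - k)))" using eq e by simp
    show False
    proof (cases "i < j")
      case True
      show False by (rule NT1[OF pp fin Tn iT jT True eq' dv])
    next
      case False
      hence "j < i" using ne by simp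
      show False by (rule NT1[OF pp fin Tn jT iT \<open>j < i\<close> eq' dv])
    qed
  qed
qed

lemma same_card:
  assumes k: "k \<le> n" and A: "A \<in> P" and A': "A' \<in> P"
    and x: "x \<in> A" "x \<in> Bset p N k" and x': "x' \<in> A'" "x' \<in> Bset p N k"
  shows "card A' = card A"
proof -
  obtain w where w: "coprime w N" "x' = w * x mod N" using B_trans[OF k x(2) x'(2)] by blast
  obtain i where i: "[w = g ^ i] (mod N)" using unit_pow[OF w(1)] by blast
  have "x' = g ^ i * x mod N"
  proof -
    have "[w * x = g ^ i * x] (mod N)" using i by (intro cong_mult) auto
    thus ?thesis using w(2) unfolding cong_def by simp
  qed
  hence "x' \<in> M i A" using x(1) unfolding mu_def by blast
  hence "A' = M i A" using blk_eq[OF A' M_blk[OF A] x'(1)] by blast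
  thus ?thesis using M_card blk_sub[OF A] by simp
qed

lemma layer_r:
  assumes k: "k < n" and A: "A \<in> P" and ak: "A \<inter> Bset p N k \<noteq> {}" and e: "card A = p ^ e"
  shows "e \<le> n - 1 - k \<and> r A = totient (p ^ (n - k - e))"
proof -
  have A0: "A \<noteq> {0}"
  proof
    assume "A = {0}"
    hence "0 \<in> Bset p N k" using ak by auto
    moreover have "0 \<in> Bset p N n" using Bn by simp
    ultimately show False using B_disj[of k n 0] k by simp
  qed
  have TA: "T A = {k}"
  proof
    show "T A \<subseteq> {k}"
    proof
      fix j assume "j \<in> T A"
      hence jn: "j \<le> n" and aj: "A \<inter> Bset p N j \<noteq> {}" unfolding T_def by auto
      have "k \<le> n" using k by simp
      have "k = j" by (rule one_layer[OF A \<open>k \<le> n\<close> jn ak aj])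
      thus "j \<in> {k}" by simp
    qed
    show "{k} \<subseteq> T A" using k ak unfolding T_def by auto
  qed
  have "r A * p ^ e = totient (p ^ (n - k))" using key_eq(2)[OF A A0] TA e by simp
  thus ?thesis using NT2[OF pp k] by blast
qed

end

theorem mainTheorem11:
  fixes p n \<alpha> :: nat and P :: "nat set set"
  assumes "prime p" and "odd p" and "n \<ge> 1"
    and "unital_partition (p ^ n) P"
    and "\<forall>A\<in>P. \<exists>e. card A = p ^ e"
    and "residue_primroot (p ^ n) \<alpha>"
  shows "(\<forall>i\<le>n. \<forall>j\<le>n. i \<noteq> j \<longrightarrow> Pk p (p ^ n) P i \<inter> Pk p (p ^ n) P j = {})
    \<and> P = (\<Union>k\<le>n. Pk p (p ^ n) P k)
    \<and> (\<forall>k<n. \<exists>b. 1 \<le> b \<and> b \<le> n - k \<and>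
          (\<forall>A\<in>Pk p (p ^ n) P k. \<forall>y\<in>A \<inter> Bset p (p ^ n) k.
              uexp (p ^ n) \<alpha> A y = totient (p ^ b)))"
proof -
  have N1: "p ^ n > 1"
  proof -
    have "p > 1" using assms(1) prime_gt_1_nat by blast
    thus ?thesis using one_less_power[of p n] assms(3) by simp
  qed
  interpret mt "p ^ n" P p n \<alpha>
    by (unfold_locales) (use assms N1 in auto)
  have part1: "\<forall>i\<le>n. \<forall>j\<le>n. i \<noteq> j \<longrightarrow> Pk p (p ^ n) P i \<inter> Pk p (p ^ n) P j = {}"
  proof (intro allI impI)
    fix i j assume ij: "i \<le> n" "j \<le> n" "i \<noteq> j"
    show "Pk p (p ^ n) P i \<inter> Pk p (p ^ n) P j = {}"
    proof (rule ccontr)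
      assume "Pk p (p ^ n) P i \<inter> Pk p (p ^ n) P j \<noteq> {}"
      then obtain A where "A \<in> P" "A \<inter> Bset p (p ^ n) i \<noteq> {}" "A \<inter> Bset p (p ^ n) j \<noteq> {}"
        unfolding Pk_def by blast
      thus False using one_layer ij by blast
    qed
  qed
  have part2: "P = (\<Union>k\<le>n. Pk p (p ^ n) P k)"
  proof
    show "(\<Union>k\<le>n. Pk p (p ^ n) P k) \<subseteq> P" unfolding Pk_def by auto
    show "P \<subseteq> (\<Union>k\<le>n. Pk p (p ^ n) P k)"
    proof
      fix A assume A: "A \<in> P"
      obtain x where x: "x \<in> A" using blk_ne[OF A] by blast
      have "x < p ^ n" using x blk_sub[OF A] by auto
      then obtain k where k: "k \<le> n" "x \<in> Bset p (p ^ n) k" using in_some_B by blast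
      hence "A \<in> Pk p (p ^ n) P k" using A x unfolding Pk_def by blast
      thus "A \<in> (\<Union>k\<le>n. Pk p (p ^ n) P k)" using k by blast
    qed
  qed
  have part3: "\<forall>k<n. \<exists>b. 1 \<le> b \<and> b \<le> n - k \<and>
          (\<forall>A\<in>Pk p (p ^ n) P k. \<forall>y\<in>A \<inter> Bset p (p ^ n) k.
              uexp (p ^ n) \<alpha> A y = totient (p ^ b))"
  proof (intro allI impI)
    fix k assume k: "k < n"
    show "\<exists>b. 1 \<le> b \<and> b \<le> n - k \<and>
          (\<forall>A\<in>Pk p (p ^ n) P k. \<forall>y\<in>A \<inter> Bset p (p ^ n) k.
              uexp (p ^ n) \<alpha> A y = totient (p ^ b))"
    proof (cases "Pk p (p ^ n) P k = {}")
      case True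
      then show ?thesis using k by (intro exI[of _ 1]) auto
    next
      case False
      then obtain A0 where A0: "A0 \<in> P" "A0 \<inter> Bset p (p ^ n) k \<noteq> {}" unfolding Pk_def by blast
      obtain e where e: "card A0 = p ^ e" using cardp A0(1) by blast
      have le: "e \<le> n - 1 - k" using layer_r[OF k A0 e] by blast
      show ?thesis
      proof (intro exI[of _ "n - k - e"] conjI ballI)
        show "1 \<le> n - k - e" using le k by simp
        show "n - k - e \<le> n - k" by simp
        fix A y assume A: "A \<in> Pk p (p ^ n) P k" and y: "y \<in> A \<inter> Bset p (p ^ n) k"
        have AP: "A \<in> P" using A unfolding Pk_def by blast
        obtain x0 where x0: "x0 \<in> A0" "x0 \<in> Bset p (p ^ n) k" using A0(2) by blast
        have yA: "y \<in> A" and yB: "y \<in> Bset p (p ^ n) k" using y by auto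
        have "card A = card A0" using same_card[OF _ A0(1) AP x0 yA yB] k by simp
        hence eA: "card A = p ^ e" using e by simp
        have "A \<inter> Bset p (p ^ n) k \<noteq> {}" using y by blast
        hence "r A = totient (p ^ (n - k - e))" using layer_r[OF k AP _ eA] by blast
        moreover have "uexp (p ^ n) \<alpha> A y = r A" using uexp_r[OF AP] y by blast
        ultimately show "uexp (p ^ n) \<alpha> A y = totient (p ^ (n - k - e))" by simp
      qed
    qed
  qed
  show ?thesis using part1 part2 part3 by blast
qed


end
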